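(* Let $\mathcal{I}=\{(i\mid A_i): i\in[m]\}$ be an index coding instance. Then $$\beta(\mathcal{I})\le \beta_{\text{P-UMCD}}(\mathcal{I}):=\min\sum_{j\in[n]}\beta_{\text{UMCD}}(M_j),$$ where the minimum is over all partitions of $[m]$ into pairwise disjoint nonempty sets $M_1,\dots,M_n$ ($n\le m$) with $M_1\cup\dots\cup M_n=[m]$.
   Context: Index coding: a server holds messages $x_i=(x_i^1,\dots,x_i^t)\in\mathbb{F}_q^t$, $i\in[m]$; receiver $i$ wants $x_i$ and knows $\{x_j: j\in A_i\}$ where $A_i\subseteq[m]\setminus\{i\}$. A $(t,r)$ index code consists of an encoding map $\phi:\mathbb{F}_q^{mt}\to\mathbb{F}_q^{r}$ and decoders $\psi_i:\mathbb{F}_q^r\times\mathbb{F}_q^{|A_i|t}\to\mathbb{F}_q^t$ with $\psi_i(\phi(x),(x_j)_{j\in A_i})=x_i$ for all messages and all $i$; its rate is $r/t$, and $\beta(\mathcal{I})$ is the infimum of $r/t$ over all $t$ and all $(t,r)$ index codes (over finite fields). For $M\subseteq[m]$, the subinstance $M$ is the instance with receiver set $M$ and side information $A_i\cap M$. $B_i=[m]\setminus(A_i\cup\{i\})$ (within a subinstance, relative to $M$). For a $0/1$ matrix $\boldsymbol{G}$, $\boldsymbol{G}_{[k]}^L$ is the submatrix of its first $k$ rows and columns in $L$; $\mathrm{mcm}(\boldsymbol{G})$ is the maximum number of $1$-entries no two in a common row or column (0 if no columns). UMCD algorithm on an instance: $N=$ all receivers, $k=0$; while $N\ne\emptyset$: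 $k\leftarrow k+1$; pick $w\in N$ minimizing $|A_w|$ over $N$ (arbitrary tie-breaking); set row $k$ of $\boldsymbol{G}$ to the indicator of $\{w\}\cup A_w$; remove $w$ from $N$; remove every $i\in N$ with $\mathrm{mcm}(\boldsymbol{G}_{[k]}^{\{i\}\cup B_i})=\mathrm{mcm}(\boldsymbol{G}_{[k]}^{B_i})+1$; output $\beta_{\text{UMCD}}=k$. $\beta_{\text{UMCD}}(M)$ is the output of (a fixed execution of) this algorithm on subinstance $M$. *)

theory Defs
  imports Complex_Main "HOL-Algebra.Ring" "HOL-Library.FuncSet" "HOL-Library.Disjoint_Sets"
begin

(* Receivers are natural numbers; an instance is given by a receiver set N and
   side-information map A (receiver i knows x_j for j \<in> A i \<inter> N).
   A finite field is represented (up to isomorphism) as a HOL-Algebra field with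
   a finite carrier of natural numbers. *)

definition msgs :: "nat ring \<Rightarrow> nat set \<Rightarrow> nat \<Rightarrow> (nat \<Rightarrow> nat \<Rightarrow> nat) set" where
  "msgs F N t = (N \<rightarrow>\<^sub>E ({..<t} \<rightarrow>\<^sub>E carrier F))"

(* (t,r) index code over F for the instance (N, A):
   encoder phi : F^{|N| t} -> F^r, decoders psi i : F^r x F^{|A_i| t} -> F^t *)
definition is_index_code ::
  "nat ring \<Rightarrow> (nat \<Rightarrow> nat set) \<Rightarrow> nat set \<Rightarrow> nat \<Rightarrow> nat \<Rightarrow> bool" where
  "is_index_code F A N t r \<longleftrightarrow>
     (\<exists>(\<phi> :: (nat \<Rightarrow> nat \<Rightarrow> nat) \<Rightarrow> (nat \<Rightarrow> nat))
        (\<psi> :: nat \<Rightarrow> (nat \<Rightarrow> nat) \<Rightarrow> (nat \<Rightarrow> nat \<Rightarrow> nat) \<Rightarrow> (nat \<Rightarrow> nat)).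
        (\<forall>x\<in>msgs F N t. \<phi> x \<in> ({..<r} \<rightarrow>\<^sub>E carrier F)) \<and>
        (\<forall>i\<in>N. \<forall>x\<in>msgs F N t. \<psi> i (\<phi> x) (restrict x (A i \<inter> N)) = x i))"

definition beta :: "(nat \<Rightarrow> nat set) \<Rightarrow> nat set \<Rightarrow> real" where
  "beta A N = Inf {real r / real t | t r. t > 0 \<and>
      (\<exists>F :: nat ring. field F \<and> finite (carrier F) \<and> is_index_code F A N t r)}"

(* A 0/1 matrix is a list of rows, each row given by the set of columns holding a 1.
   mcm rows L: maximum number of 1-entries in columns L, no two sharing a row or column. *)
definition mcm :: "nat set list \<Rightarrow> nat set \<Rightarrow> nat" where
  "mcm rows L = Max {card E | E. E \<subseteq> {(a, c). a < length rows \<and> c \<in> L \<and> c \<in> rows ! a}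
                                   \<and> inj_on fst E \<and> inj_on snd E}"

definition Bset :: "(nat \<Rightarrow> nat set) \<Rightarrow> nat set \<Rightarrow> nat \<Rightarrow> nat set" where
  "Bset A M i = M - (A i \<union> {i})"

(* umcd_exec A M N rows k: from state (remaining receivers N, matrix rows so far),
   some execution of UMCD on subinstance M terminates with output k. *)
inductive umcd_exec :: "(nat \<Rightarrow> nat set) \<Rightarrow> nat set \<Rightarrow> nat set \<Rightarrow> nat set list \<Rightarrow> nat \<Rightarrow> bool"
  for A :: "nat \<Rightarrow> nat set" and M :: "nat set" where
  stop: "umcd_exec A M {} rows (length rows)"
| step: "\<lbrakk> N \<noteq> {}; w \<in> N; \<forall>v\<in>N. card (A w \<inter> M) \<le> card (A v \<inter> M);
           rows' = rows @ [insert w (A w \<inter> M)];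
           umcd_exec A M ((N - {w}) - {i \<in> N - {w}.
               mcm rows' (insert i (Bset A M i)) = mcm rows' (Bset A M i) + 1}) rows' k \<rbrakk>
         \<Longrightarrow> umcd_exec A M N rows k"

definition umcd_output :: "(nat \<Rightarrow> nat set) \<Rightarrow> nat set \<Rightarrow> nat \<Rightarrow> bool" where
  "umcd_output A M k \<longleftrightarrow> umcd_exec A M M [] k"

end

theory Submission
  imports Defs "Jordan_Normal_Form.Determinant" "HOL-Library.Nat_Bijection"
begin

definition F2 :: "nat ring" where
  "F2 = \<lparr>partial_object.carrier = {0, 1}, monoid.mult = (\<lambda>a b. a * b), monoid.one = 1, ring.zero = 0, ring.add = (\<lambda>a b. (a + b) mod 2)\<rparr>"

lemma F2_cring: "cring F2"
proof (rule cringI)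
  show "abelian_group F2"
    by (rule abelian_groupI) (auto simp: F2_def)
  show "comm_monoid F2"
    by (rule comm_monoidI) (auto simp: F2_def)
qed (auto simp: F2_def)

lemma F2_field: "field F2"
proof -
  interpret cring F2 by (rule F2_cring)
  show ?thesis
    by (rule cring_fieldI2) (auto simp: F2_def)
qed

lemma F2_carrier: "carrier F2 = {0, 1}" by (simp add: F2_def)

lemma pow2_lessThan_sum: "(\<Sum>d<n. (2::nat) ^ d) < 2 ^ n"
  by (induction n) auto

lemma pow2_sum_less:
  assumes "finite S" "\<forall>d\<in>S. d < n"
  shows "(\<Sum>d\<in>S. (2::nat) ^ d) < 2 ^ n"
proof -
  have "(\<Sum>d\<in>S. (2::nat) ^ d) \<le> (\<Sum>d<n. 2 ^ d)"
    using assms by (intro sum_mono2) auto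
  also have "\<dots> < 2 ^ n" by (rule pow2_lessThan_sum)
  finally show ?thesis .
qed

lemma pow2_split:
  assumes "finite S"
  shows "(\<Sum>d\<in>S. (2::nat) ^ d) = (if n \<in> S then 2 ^ n else 0) + (\<Sum>d\<in>S - {n}. 2 ^ d)"
proof (cases "n \<in> S")
  case True
  have "(\<Sum>d\<in>S. (2::nat) ^ d) = 2 ^ n + (\<Sum>d\<in>S - {n}. 2 ^ d)"
    by (rule sum.remove[OF assms True])
  then show ?thesis by (simp only: if_P[OF True])
next
  case False
  then have e: "S - {n} = S" by blast
  show ?thesis by (simp only: if_not_P[OF False] e add_0_left)
qed

lemma pow2_sum_inj_aux:
  "\<forall>S T. S \<subseteq> {..<n} \<longrightarrow> T \<subseteq> {..<n} \<longrightarrow>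
     (\<Sum>d\<in>S. (2::nat) ^ d) = (\<Sum>d\<in>T. 2 ^ d) \<longrightarrow> S = T"
proof (induction n)
  case 0
  then show ?case by blast
next
  case (Suc n)
  show ?case
  proof (intro allI impI)
    fix S T :: "nat set"
    assume S: "S \<subseteq> {..<Suc n}" and T: "T \<subseteq> {..<Suc n}"
      and eq: "(\<Sum>d\<in>S. (2::nat) ^ d) = (\<Sum>d\<in>T. 2 ^ d)"
    have fS: "finite S" "finite T" using S T finite_subset by blast+
    have S': "S - {n} \<subseteq> {..<n}" "T - {n} \<subseteq> {..<n}" using S T by auto
    have sS: "(\<Sum>d\<in>S. (2::nat) ^ d) = (if n \<in> S then 2 ^ n else 0) + (\<Sum>d\<in>S - {n}. 2 ^ d)"
      by (rule pow2_split[OF fS(1)])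
    have sT: "(\<Sum>d\<in>T. (2::nat) ^ d) = (if n \<in> T then 2 ^ n else 0) + (\<Sum>d\<in>T - {n}. 2 ^ d)"
      by (rule pow2_split[OF fS(2)])
    have lS: "(\<Sum>d\<in>S - {n}. (2::nat) ^ d) < 2 ^ n"
      by (rule pow2_sum_less) (use S' fS in auto)
    have lT: "(\<Sum>d\<in>T - {n}. (2::nat) ^ d) < 2 ^ n"
      by (rule pow2_sum_less) (use S' fS in auto)
    have nn: "(n \<in> S) = (n \<in> T) \<and> (\<Sum>d\<in>S - {n}. (2::nat) ^ d) = (\<Sum>d\<in>T - {n}. 2 ^ d)"
    proof (cases "n \<in> S")
      case True
      note sS' = sS[unfolded if_P[OF True]]
      show ?thesis
      proof (cases "n \<in> T")
        case True
        note sT' = sT[unfolded if_P[OF True]]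
        show ?thesis using sS' sT' eq \<open>n \<in> S\<close> True by linarith
      next
        case False
        note sT' = sT[unfolded if_not_P[OF False]]
        have False using sS' sT' eq lT by linarith
        then show ?thesis ..
      qed
    next
      case False
      note sS' = sS[unfolded if_not_P[OF False]]
      show ?thesis
      proof (cases "n \<in> T")
        case True
        note sT' = sT[unfolded if_P[OF True]]
        have False using sS' sT' eq lS by linarith
        then show ?thesis ..
      next
        case False
        note sT' = sT[unfolded if_not_P[OF False]]
        show ?thesis using sS' sT' eq \<open>n \<notin> S\<close> False by linarith
      qed
    qed
    then have "S - {n} = T - {n}" using Suc.IH S' by blast
    then show "S = T" using nn by blast
  qed
qed

lemma pow2_sum_inj:
  assumes "finite S" "finite T" "(\<Sum>d\<in>S. (2::nat) ^ d) = (\<Sum>d\<in>T. 2 ^ d)"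
  shows "S = T"
proof -
  have fU: "finite (S \<union> T)" using assms by auto
  have "\<exists>n. \<forall>x\<in>S \<union> T. x < n" using fU finite_nat_set_iff_bounded by blast
  then obtain n where n: "\<forall>x\<in>S \<union> T. x < n" by blast
  then have "S \<subseteq> {..<n}" "T \<subseteq> {..<n}" by auto
  then show ?thesis using pow2_sum_inj_aux assms(3) by blast
qed

lemma signed_pow2_sum_nz:
  assumes "finite S" "S \<noteq> {}" "\<forall>d\<in>S. s d = 1 \<or> s d = -1"
  shows "(\<Sum>d\<in>S. s d * (2::int) ^ d) \<noteq> 0"
proof
  assume z: "(\<Sum>d\<in>S. s d * (2::int) ^ d) = 0"
  define d0 where "d0 = Max S"
  have d0S: "d0 \<in> S" using assms d0_def by auto
  have lt: "\<forall>d\<in>S - {d0}. d < d0"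
  proof
    fix d assume d: "d \<in> S - {d0}"
    have "d \<le> d0" using Max_ge[OF assms(1)] d unfolding d0_def by simp
    then show "d < d0" using d by simp
  qed
  have "\<bar>\<Sum>d\<in>S - {d0}. s d * (2::int) ^ d\<bar> \<le> (\<Sum>d\<in>S - {d0}. \<bar>s d * 2 ^ d\<bar>)"
    by (rule sum_abs)
  also have "\<dots> = (\<Sum>d\<in>S - {d0}. (2::int) ^ d)"
    using assms(3) by (intro sum.cong) (auto simp: abs_mult)
  also have "\<dots> = int (\<Sum>d\<in>S - {d0}. (2::nat) ^ d)" by simp
  also have "\<dots> < int (2 ^ d0)"
  proof -
    have "(\<Sum>d\<in>S - {d0}. (2::nat) ^ d) < 2 ^ d0"
      using pow2_sum_less[of "S - {d0}" d0] lt assms(1) by auto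
    then show ?thesis by (simp only: of_nat_less_iff)
  qed
  finally have small: "\<bar>\<Sum>d\<in>S - {d0}. s d * (2::int) ^ d\<bar> < 2 ^ d0" by simp
  have "(\<Sum>d\<in>S. s d * (2::int) ^ d) = s d0 * 2 ^ d0 + (\<Sum>d\<in>S - {d0}. s d * 2 ^ d)"
    by (rule sum.remove[OF assms(1) d0S])
  then have "\<bar>s d0 * 2 ^ d0\<bar> = \<bar>\<Sum>d\<in>S - {d0}. s d * (2::int) ^ d\<bar>" using z by linarith
  moreover have "\<bar>s d0 * (2::int) ^ d0\<bar> = 2 ^ d0" using assms(3) d0S by (auto simp: abs_mult)
  ultimately show False using small by linarith
qed

lemma bits_inj:
  "\<forall>Y Y'. Y < 2 ^ L \<longrightarrow> Y' < 2 ^ L \<longrightarrow> (\<forall>l<L. (Y div 2 ^ l) mod 2 = ((Y'::nat) div 2 ^ l) mod 2) \<longrightarrow> Y = Y'"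
proof (induction L)
  case 0
  then show ?case by auto
next
  case (Suc L)
  show ?case
  proof (intro allI impI)
    fix Y Y' :: nat
    assume a: "Y < 2 ^ Suc L" "Y' < 2 ^ Suc L"
      and b: "\<forall>l<Suc L. (Y div 2 ^ l) mod 2 = (Y' div 2 ^ l) mod 2"
    have m: "Y mod 2 = Y' mod 2" using b[rule_format, of 0] by simp
    have "\<forall>l<L. (Y div 2 div 2 ^ l) mod 2 = (Y' div 2 div 2 ^ l) mod 2"
      using b by (auto simp: div_mult2_eq[symmetric])
    moreover have "Y div 2 < 2 ^ L" "Y' div 2 < 2 ^ L" using a by auto
    ultimately have "Y div 2 = Y' div 2" using Suc.IH by blast
    then show "Y = Y'" using m by (metis div_mult_mod_eq)
  qed
qed

lemma binsum_less:
  assumes "\<forall>l<t. x l \<le> (1::nat)"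
  shows "(\<Sum>l<t. x l * 2 ^ l) < 2 ^ t"
  using assms
proof (induction t)
  case 0 then show ?case by simp
next
  case (Suc t)
  have "(\<Sum>l<Suc t. x l * 2 ^ l) = (\<Sum>l<t. x l * 2 ^ l) + x t * 2 ^ t" by simp
  moreover have "(\<Sum>l<t. x l * 2 ^ l) < 2 ^ t" using Suc by auto
  moreover have "x t * 2 ^ t \<le> 2 ^ t" using Suc.prems by auto
  moreover have "(2::nat) ^ Suc t = 2 ^ t + 2 ^ t" by simp
  ultimately show ?case by linarith
qed

lemma binsum_inj:
  "(\<forall>l<t. x l \<le> (1::nat)) \<Longrightarrow> (\<forall>l<t. x' l \<le> 1) \<Longrightarrow>
   (\<Sum>l<t. x l * 2 ^ l) = (\<Sum>l<t. x' l * 2 ^ l) \<Longrightarrow> \<forall>l<t. x l = x' l"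
proof (induction t)
  case 0 then show ?case by simp
next
  case (Suc t)
  let ?a = "\<Sum>l<t. x l * 2 ^ l" and ?b = "\<Sum>l<t. x' l * 2 ^ l"
  have la: "?a < 2 ^ t" using Suc.prems binsum_less[of t x] by auto
  have lb: "?b < 2 ^ t" using Suc.prems binsum_less[of t x'] by auto
  have e: "?a + x t * 2 ^ t = ?b + x' t * 2 ^ t" using Suc.prems by simp
  have "(?a + x t * 2 ^ t) div 2 ^ t = x t" using la by simp
  moreover have "(?b + x' t * 2 ^ t) div 2 ^ t = x' t" using lb by simp
  ultimately have xt: "x t = x' t" using e by simp
  then have "?a = ?b" using e by simp
  then have "\<forall>l<t. x l = x' l" using Suc by auto
  then show ?case using xt less_Suc_eq by auto
qed

definition cells :: "nat set list \<Rightarrow> nat set \<Rightarrow> (nat \<times> nat) set" where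
  "cells rs L = {(a, c). a < length rs \<and> c \<in> L \<and> c \<in> rs ! a}"

lemma mem_cells [simp]: "x \<in> cells rs L \<longleftrightarrow> fst x < length rs \<and> snd x \<in> L \<and> snd x \<in> rs ! fst x"
  unfolding cells_def by (cases x) auto

lemma cells_finite: "finite L \<Longrightarrow> finite (cells rs L)"
  by (rule finite_subset[of _ "{..<length rs} \<times> L"]) auto

definition mcmset :: "nat set list \<Rightarrow> nat set \<Rightarrow> nat set" where
  "mcmset rs L = card ` {E. E \<subseteq> cells rs L \<and> inj_on fst E \<and> inj_on snd E}"

lemma mcm_eq: "mcm rs L = Max (mcmset rs L)"
proof -
  have "{card E | E. E \<subseteq> {(a, c). a < length rs \<and> c \<in> L \<and> c \<in> rs ! a} \<and> inj_on fst E \<and> inj_on snd E} = mcmset rs L"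
    unfolding mcmset_def cells_def by blast
  then show ?thesis unfolding mcm_def by simp
qed

lemma mcm_set_finite:
  assumes "finite L"
  shows "finite (mcmset rs L)"
proof -
  have "mcmset rs L \<subseteq> card ` Pow (cells rs L)"
    unfolding mcmset_def by auto
  then show ?thesis using cells_finite[OF assms] finite_subset by blast
qed

lemma mcm_ge:
  assumes "finite L" "E \<subseteq> cells rs L" "inj_on fst E" "inj_on snd E"
  shows "card E \<le> mcm rs L"
proof -
  have "card E \<in> mcmset rs L"
    unfolding mcmset_def using assms(2-4) by blast
  then show ?thesis unfolding mcm_eq using Max_ge[OF mcm_set_finite[OF assms(1)]] by blast
qed

lemma mcm_obtain:
  assumes "finite L"
  shows "\<exists>E. E \<subseteq> cells rs L \<and> inj_on fst E \<and> inj_on snd E \<and> card E = mcm rs L"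
proof -
  have ne: "mcmset rs L \<noteq> {}" unfolding mcmset_def by auto
  have "mcm rs L \<in> mcmset rs L"
    unfolding mcm_eq using Max_in[OF mcm_set_finite[OF assms] ne] .
  then obtain E where E: "mcm rs L = card E" "E \<in> {E. E \<subseteq> cells rs L \<and> inj_on fst E \<and> inj_on snd E}"
    unfolding mcmset_def by (rule imageE)
  from E(2) have "E \<subseteq> cells rs L \<and> inj_on fst E \<and> inj_on snd E" by (rule CollectD)
  then show ?thesis using E(1) by (intro exI[of _ E]) simp
qed

lemma mcm_new_row:
  assumes fin: "finite B" and wr: "w \<in> r" and rB: "r \<inter> B = {}" and wB: "w \<notin> B"
  shows "mcm (rs @ [r]) (insert w B) = mcm (rs @ [r]) B + 1"
proof (rule antisym)
  let ?R = "rs @ [r]"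
  obtain E where E: "E \<subseteq> cells ?R B" "inj_on fst E" "inj_on snd E" "card E = mcm ?R B"
    using mcm_obtain[OF fin] by blast
  have fE: "finite E" using E(1) cells_finite[OF fin] finite_subset by blast
  have nfst: "length rs \<notin> fst ` E"
  proof
    assume "length rs \<in> fst ` E"
    then obtain c where "(length rs, c) \<in> E" by force
    then have "c \<in> B" "c \<in> r" using E(1) by (auto simp: nth_append)
    then show False using rB by blast
  qed
  have nsnd: "w \<notin> snd ` E" using E(1) wB by auto
  let ?E = "insert (length rs, w) E"
  have "?E \<subseteq> cells ?R (insert w B)" using E(1) wr by (auto simp: nth_append)
  moreover have "inj_on fst ?E" using E(2) nfst by (auto simp: inj_on_insert)
  moreover have "inj_on snd ?E" using E(3) nsnd by (auto simp: inj_on_insert)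
  moreover have "card ?E = card E + 1"
  proof -
    have "(length rs, w) \<notin> E" using nsnd by force
    then show ?thesis using fE by simp
  qed
  ultimately show "mcm ?R B + 1 \<le> mcm ?R (insert w B)"
    using mcm_ge[of "insert w B" ?E ?R] fin E(4) by auto
next
  let ?R = "rs @ [r]"
  obtain E where E: "E \<subseteq> cells ?R (insert w B)" "inj_on fst E" "inj_on snd E" "card E = mcm ?R (insert w B)"
    using mcm_obtain[of "insert w B" ?R] fin by blast
  have fE: "finite E" using E(1) cells_finite[of "insert w B" ?R] fin finite_subset by blast
  let ?E = "{e \<in> E. snd e \<noteq> w}"
  have sub: "?E \<subseteq> cells ?R B" using E(1) by auto
  have i1: "inj_on fst ?E" by (rule inj_on_subset[OF E(2)]) auto
  have i2: "inj_on snd ?E" by (rule inj_on_subset[OF E(3)]) auto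
  have "card ?E \<le> mcm ?R B" by (rule mcm_ge[OF fin sub i1 i2])
  moreover have "card E \<le> card ?E + 1"
  proof -
    have c1: "card {e \<in> E. snd e = w} \<le> 1"
    proof -
      have "inj_on snd {e \<in> E. snd e = w}" by (rule inj_on_subset[OF E(3)]) auto
      then have "card {e \<in> E. snd e = w} = card (snd ` {e \<in> E. snd e = w})"
        by (rule card_image[symmetric])
      also have "\<dots> \<le> card {w}" by (rule card_mono) auto
      finally show ?thesis by simp
    qed
    have "card E = card (?E \<union> {e \<in> E. snd e = w})" by (rule arg_cong[where f=card]) auto
    also have "\<dots> \<le> card ?E + card {e \<in> E. snd e = w}" by (rule card_Un_le)
    finally show ?thesis using c1 by linarith
  qed
  ultimately show "mcm ?R (insert w B) \<le> mcm ?R B + 1" using E(4) by simp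
qed

lemma exec_prop:
  assumes "umcd_exec A M N rs k" "finite M" "N \<subseteq> M"
  shows "\<exists>rf. length rf = k \<and> take (length rs) rf = rs \<and>
           (\<forall>j. length rs \<le> j \<and> j < k \<longrightarrow> rf ! j \<subseteq> M) \<and>
           (\<forall>i\<in>N. \<exists>J\<le>k. mcm (take J rf) (insert i (Bset A M i)) = mcm (take J rf) (Bset A M i) + 1)"
  using assms
proof (induction rule: umcd_exec.induct)
  case (stop rs)
  then show ?case by auto
next
  case (step N w rs' rs k)
  let ?N' = "(N - {w}) - {i \<in> N - {w}. mcm rs' (insert i (Bset A M i)) = mcm rs' (Bset A M i) + 1}"
  have "?N' \<subseteq> M" using step.prems by auto
  then obtain rf where rf: "length rf = k" "take (length rs') rf = rs'"
    "\<forall>j. length rs' \<le> j \<and> j < k \<longrightarrow> rf ! j \<subseteq> M"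
    "\<forall>i\<in>?N'. \<exists>J\<le>k. mcm (take J rf) (insert i (Bset A M i)) = mcm (take J rf) (Bset A M i) + 1"
    using step.IH step.prems by blast
  have lr: "length rs' = Suc (length rs)" using step.hyps by simp
  have lk: "length rs' \<le> k"
  proof -
    have "length rs' = min (length rs') k" using arg_cong[OF rf(2), of length] rf(1) by simp
    then show ?thesis by (simp add: min_def split: if_splits)
  qed
  have wM: "w \<in> M" using step.hyps step.prems by blast
  show ?case
  proof (rule exI[of _ rf], intro conjI allI impI ballI)
    show "length rf = k" by fact
    have "take (length rs) rf = take (length rs) (take (length rs') rf)" using lr by (simp add: min_def)
    also have "\<dots> = rs" using rf(2) step.hyps(4) by simp
    finally show "take (length rs) rf = rs" .
  next
    fix j assume j: "length rs \<le> j \<and> j < k"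
    show "rf ! j \<subseteq> M"
    proof (cases "j = length rs")
      case True
      have "rf ! j = take (length rs') rf ! j" using lr True by simp
      also have "\<dots> = rs' ! j" using rf(2) by simp
      also have "\<dots> = insert w (A w \<inter> M)" using step.hyps(4) True by simp
      finally show ?thesis using wM by auto
    next
      case False
      then show ?thesis using rf(3) j lr by auto
    qed
  next
    fix i assume iN: "i \<in> N"
    show "\<exists>J\<le>k. mcm (take J rf) (insert i (Bset A M i)) = mcm (take J rf) (Bset A M i) + 1"
    proof (cases "i \<in> ?N'")
      case True
      then show ?thesis using rf(4) by blast
    next
      case False
      have "mcm rs' (insert i (Bset A M i)) = mcm rs' (Bset A M i) + 1"
      proof (cases "i = w")
        case True
        have "mcm (rs @ [insert w (A w \<inter> M)]) (insert w (Bset A M w)) =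
              mcm (rs @ [insert w (A w \<inter> M)]) (Bset A M w) + 1"
          by (rule mcm_new_row) (use step.prems in \<open>auto simp: Bset_def\<close>)
        then show ?thesis using True step.hyps(4) by simp
      next
        case False
        then show ?thesis using \<open>i \<notin> ?N'\<close> iN by blast
      qed
      then have "mcm (take (length rs') rf) (insert i (Bset A M i)) = mcm (take (length rs') rf) (Bset A M i) + 1"
        by (simp only: rf(2))
      then show ?thesis using lk by blast
    qed
  qed
qed

lemma det_col_linear:
  fixes f :: "nat \<Rightarrow> nat \<Rightarrow> int"
  assumes p0: "p0 < n" and fS: "finite S"
  shows "det (mat n n (\<lambda>(a,b). if b = p0 then (\<Sum>c\<in>S. lam c * f a c) else f a (h b))) =
         (\<Sum>c\<in>S. lam c * det (mat n n (\<lambda>(a,b). f a ((h(p0:=c)) b))))"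
proof -
  define U where "U = (\<lambda>a. \<Sum>c\<in>S. lam c * f a c)"
  define L where "L = mat n n (\<lambda>(a,b). if b = p0 then U a else f a (h b))"
  define R where "R = (\<lambda>c. mat n n (\<lambda>(a,b). f a ((h(p0:=c)) b)))"
  define Perm where "Perm = {\<pi>. \<pi> permutes {0..<n}}"
  have per: "(\<Prod>a=0..<n. L $$ (a, \<pi> a)) = (\<Sum>c\<in>S. lam c * (\<Prod>a=0..<n. R c $$ (a, \<pi> a)))"
    if \<pi>: "\<pi> permutes {0..<n}" for \<pi>
  proof -
    have \<pi>lt: "\<And>a. a < n \<Longrightarrow> \<pi> a < n" using permutes_in_image[OF \<pi>] by auto
    define a0 where "a0 = inv_into UNIV \<pi> p0"
    have a0: "a0 < n" "\<pi> a0 = p0"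
      using permutes_in_image[OF permutes_inv[OF \<pi>]] p0 permutes_inverses(1)[OF \<pi>] a0_def by auto
    have uniq: "\<And>a. \<pi> a = p0 \<Longrightarrow> a = a0"
      using a0(2) permutes_inj[OF \<pi>] by (metis injD)
    have a0mem: "a0 \<in> {0..<n}" using a0 by simp
    define Rst where "Rst = (\<Prod>a\<in>{0..<n} - {a0}. f a (h (\<pi> a)))"
    have l1: "(\<Prod>a=0..<n. L $$ (a, \<pi> a)) = L $$ (a0, \<pi> a0) * (\<Prod>a\<in>{0..<n} - {a0}. L $$ (a, \<pi> a))"
      by (rule prod.remove[OF finite_atLeastLessThan a0mem])
    have l2: "(\<Prod>a\<in>{0..<n} - {a0}. L $$ (a, \<pi> a)) = Rst"
      unfolding Rst_def
    proof (rule prod.cong[OF refl])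
      fix a assume a: "a \<in> {0..<n} - {a0}"
      then have "a < n" "\<pi> a < n" "\<pi> a \<noteq> p0" using \<pi>lt uniq by auto
      then show "L $$ (a, \<pi> a) = f a (h (\<pi> a))" unfolding L_def by simp
    qed
    have l3: "L $$ (a0, \<pi> a0) = U a0" using a0 p0 unfolding L_def by simp
    have l: "(\<Prod>a=0..<n. L $$ (a, \<pi> a)) = U a0 * Rst" unfolding l1 l2 l3 ..
    have r: "(\<Prod>a=0..<n. R c $$ (a, \<pi> a)) = f a0 c * Rst" for c
    proof -
      have r1: "(\<Prod>a=0..<n. R c $$ (a, \<pi> a)) = R c $$ (a0, \<pi> a0) * (\<Prod>a\<in>{0..<n} - {a0}. R c $$ (a, \<pi> a))"
        by (rule prod.remove[OF finite_atLeastLessThan a0mem])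
      have r2: "(\<Prod>a\<in>{0..<n} - {a0}. R c $$ (a, \<pi> a)) = Rst"
        unfolding Rst_def
      proof (rule prod.cong[OF refl])
        fix a assume a: "a \<in> {0..<n} - {a0}"
        then have "a < n" "\<pi> a < n" "\<pi> a \<noteq> p0" using \<pi>lt uniq by auto
        then show "R c $$ (a, \<pi> a) = f a (h (\<pi> a))" unfolding R_def by simp
      qed
      have r3: "R c $$ (a0, \<pi> a0) = f a0 c" using a0 p0 unfolding R_def by simp
      show ?thesis unfolding r1 r2 r3 ..
    qed
    have "U a0 * Rst = (\<Sum>c\<in>S. lam c * (f a0 c * Rst))"
      unfolding U_def by (simp add: sum_distrib_right mult.assoc)
    then show ?thesis unfolding l r .
  qed
  have detL: "det L = (\<Sum>\<pi>\<in>Perm. signof \<pi> * (\<Prod>a=0..<n. L $$ (a, \<pi> a)))"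
    unfolding Perm_def by (rule det_def') (simp add: L_def)
  have detR: "det (R c) = (\<Sum>\<pi>\<in>Perm. signof \<pi> * (\<Prod>a=0..<n. R c $$ (a, \<pi> a)))" for c
    unfolding Perm_def by (rule det_def') (simp add: R_def)
  have "det L = (\<Sum>\<pi>\<in>Perm. signof \<pi> * (\<Sum>c\<in>S. lam c * (\<Prod>a=0..<n. R c $$ (a, \<pi> a))))"
    unfolding detL
  proof (rule sum.cong[OF refl])
    fix \<pi> assume "\<pi> \<in> Perm"
    then have "\<pi> permutes {0..<n}" unfolding Perm_def by simp
    then show "signof \<pi> * (\<Prod>a=0..<n. L $$ (a, \<pi> a)) = signof \<pi> * (\<Sum>c\<in>S. lam c * (\<Prod>a=0..<n. R c $$ (a, \<pi> a)))"
      using per by simp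
  qed
  also have "\<dots> = (\<Sum>\<pi>\<in>Perm. \<Sum>c\<in>S. lam c * (signof \<pi> * (\<Prod>a=0..<n. R c $$ (a, \<pi> a))))"
    by (simp only: sum_distrib_left mult.left_commute)
  also have "\<dots> = (\<Sum>c\<in>S. \<Sum>\<pi>\<in>Perm. lam c * (signof \<pi> * (\<Prod>a=0..<n. R c $$ (a, \<pi> a))))"
    by (rule sum.swap)
  also have "\<dots> = (\<Sum>c\<in>S. lam c * det (R c))"
    unfolding detR by (simp only: sum_distrib_left)
  finally have X: "det L = (\<Sum>c\<in>S. lam c * det (R c))" .
  show ?thesis using X by (simp only: L_def R_def U_def)
qed

definition wt :: "nat \<Rightarrow> nat \<Rightarrow> nat" where
  "wt j c = 2 ^ (2 ^ prod_encode (j, c))"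

definition Gm :: "nat set \<Rightarrow> nat \<Rightarrow> nat \<Rightarrow> int" where
  "Gm r j c = (if c \<in> r then int (wt j c) else 0)"

lemma LA:
  fixes Z :: "nat \<Rightarrow> int" and rs :: "nat set list"
  assumes fin: "finite B" and iB: "i \<notin> B"
    and mc: "mcm rs (insert i B) = mcm rs B + 1"
    and eq: "\<forall>j<length rs. (\<Sum>c\<in>insert i B. Gm (rs ! j) j c * Z c) = 0"
  shows "Z i = 0"
proof -
  define s where "s = mcm rs B"
  define n where "n = Suc s"
  obtain E where E: "E \<subseteq> cells rs (insert i B)" "inj_on fst E" "inj_on snd E" "card E = n"
    using mcm_obtain[of "insert i B" rs] fin mc n_def s_def by auto
  have fE: "finite E" using E(1) cells_finite[of "insert i B" rs] fin finite_subset by blast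
  obtain e where e: "bij_betw e {0..<n} E" using ex_bij_betw_nat_finite[OF fE] unfolding E(4) by blast
  define \<rho> where "\<rho> = (\<lambda>a. fst (e a))"
  define \<tau> where "\<tau> = (\<lambda>a. snd (e a))"
  have eE: "\<And>a. a < n \<Longrightarrow> e a \<in> E" using bij_betwE[OF e] by simp
  have img: "e ` {0..<n} = E" using e by (simp add: bij_betw_def)
  have "inj_on (fst \<circ> e) {0..<n}"
    by (rule comp_inj_on) (use e E(2) in \<open>auto simp: bij_betw_def\<close>)
  then have \<rho>inj: "inj_on \<rho> {0..<n}" unfolding \<rho>_def by (simp add: o_def)
  have "inj_on (snd \<circ> e) {0..<n}"
    by (rule comp_inj_on) (use e E(3) in \<open>auto simp: bij_betw_def\<close>)
  then have \<tau>inj: "inj_on \<tau> {0..<n}" unfolding \<tau>_def by (simp add: o_def)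
  have cell: "\<rho> a < length rs \<and> \<tau> a \<in> insert i B \<and> \<tau> a \<in> rs ! (\<rho> a)" if "a < n" for a
  proof -
    have "e a \<in> cells rs (insert i B)" using eE[OF that] E(1) by blast
    then show ?thesis unfolding \<rho>_def \<tau>_def by (cases "e a") auto
  qed
  have "i \<in> snd ` E"
  proof (rule ccontr)
    assume "i \<notin> snd ` E"
    then have "E \<subseteq> cells rs B" using E(1) by force
    then have "card E \<le> s" using mcm_ge[OF fin _ E(2) E(3)] s_def by auto
    then show False using E(4) n_def by simp
  qed
  then obtain p0 where p0: "p0 < n" "\<tau> p0 = i"
    using img unfolding \<tau>_def by force
  have \<tau>B: "\<tau> b \<in> B" if "b < n" "b \<noteq> p0" for b
  proof -
    have "\<tau> b \<noteq> i"
    proof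
      assume "\<tau> b = i"
      then have "\<tau> b = \<tau> p0" using p0 by simp
      then have "b = p0" using inj_onD[OF \<tau>inj] that(1) p0(1) by simp
      then show False using that(2) by simp
    qed
    then show ?thesis using cell[OF that(1)] by auto
  qed
  define f where "f = (\<lambda>a c. Gm (rs ! (\<rho> a)) (\<rho> a) c)"

  have D2: "det (mat n n (\<lambda>(a,b). f a (h b))) = 0" if hB: "\<forall>b<n. h b \<in> B" for h
  proof (cases "inj_on h {0..<n}")
    case False
    then obtain b1 b2 where b: "b1 < n" "b2 < n" "b1 \<noteq> b2" "h b1 = h b2" by (auto simp: inj_on_def)
    show ?thesis
      by (rule det_identical_columns[of _ n b1 b2]) (use b in \<open>auto intro!: eq_vecI\<close>)
  next
    case True
    have "det (mat n n (\<lambda>(a,b). f a (h b))) =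
       (\<Sum>\<pi>\<in>{\<pi>. \<pi> permutes {0..<n}}. signof \<pi> * (\<Prod>a=0..<n. mat n n (\<lambda>(a,b). f a (h b)) $$ (a, \<pi> a)))"
      by (rule det_def') simp
    also have "\<dots> = 0"
    proof (rule sum.neutral, rule ballI)
      fix \<pi> assume "\<pi> \<in> {\<pi>. \<pi> permutes {0..<n}}"
      then have \<pi>: "\<pi> permutes {0..<n}" by simp
      have \<pi>lt: "\<And>a. a < n \<Longrightarrow> \<pi> a < n" using permutes_in_image[OF \<pi>] by auto
      have "(\<Prod>a=0..<n. mat n n (\<lambda>(a,b). f a (h b)) $$ (a, \<pi> a)) = (\<Prod>a=0..<n. f a (h (\<pi> a)))"
        using \<pi>lt by (intro prod.cong) auto
      also have "\<dots> = 0"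
      proof (rule ccontr)
        assume nz: "(\<Prod>a=0..<n. f a (h (\<pi> a))) \<noteq> 0"
        have inrow: "h (\<pi> a) \<in> rs ! (\<rho> a)" if "a < n" for a
        proof -
          have "f a (h (\<pi> a)) \<noteq> 0" using nz that by (auto simp: prod_zero_iff)
          then show ?thesis unfolding f_def Gm_def by (auto split: if_splits)
        qed
        define E' where "E' = (\<lambda>a. (\<rho> a, h (\<pi> a))) ` {0..<n}"
        have "E' \<subseteq> cells rs B" using inrow cell hB \<pi>lt unfolding E'_def by auto
        moreover have "inj_on fst E'" unfolding E'_def inj_on_def
          using \<rho>inj by (auto dest: inj_onD)
        moreover have "inj_on snd E'" unfolding E'_def inj_on_def
        proof (clarsimp)
          fix a a' assume a: "a < n" "a' < n" "h (\<pi> a) = h (\<pi> a')"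
          then have "\<pi> a = \<pi> a'" using inj_onD[OF True a(3)] \<pi>lt a(1,2) by simp
          then have "a = a'" using injD[OF permutes_inj[OF \<pi>]] by simp
          then show "\<rho> a = \<rho> a'" by simp
        qed
        moreover have "card E' = n"
        proof -
          have "inj_on (\<lambda>a. (\<rho> a, h (\<pi> a))) {0..<n}"
            using \<rho>inj by (auto simp: inj_on_def)
          then show ?thesis unfolding E'_def by (simp add: card_image)
        qed
        ultimately have "card E' \<le> s" "card E' = n" unfolding s_def using mcm_ge[OF fin] by blast+
        then have "n \<le> s" by simp
        then show False using n_def by simp
      qed
      finally show "signof \<pi> * (\<Prod>a=0..<n. mat n n (\<lambda>(a,b). f a (h b)) $$ (a, \<pi> a)) = 0" by simp
    qed
    finally show ?thesis .
  qed

  have D1: "det (mat n n (\<lambda>(a,b). f a (\<tau> b))) \<noteq> 0"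
  proof -
    define Pp where "Pp = {\<pi>. \<pi> permutes {0..<n} \<and> (\<forall>a<n. \<tau> (\<pi> a) \<in> rs ! (\<rho> a))}"
    define Ex where "Ex = (\<lambda>\<pi>. \<Sum>a=0..<n. (2::nat) ^ prod_encode (\<rho> a, \<tau> (\<pi> a)))"
    have fPerm: "finite {\<pi>. \<pi> permutes {0..<n}}" by (simp add: finite_permutations)
    have PpSub: "Pp \<subseteq> {\<pi>. \<pi> permutes {0..<n}}" unfolding Pp_def by auto
    have fPp: "finite Pp" using fPerm PpSub finite_subset by blast
    have idPp: "id \<in> Pp" unfolding Pp_def using cell by (auto simp: permutes_id)
    have termPp: "(\<Prod>a=0..<n. f a (\<tau> (\<pi> a))) = 2 ^ Ex \<pi>" if "\<pi> \<in> Pp" for \<pi>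
    proof -
      have "(\<Prod>a=0..<n. f a (\<tau> (\<pi> a))) = (\<Prod>a=0..<n. (2::int) ^ (2 ^ prod_encode (\<rho> a, \<tau> (\<pi> a))))"
        using that unfolding Pp_def f_def Gm_def wt_def by (intro prod.cong) auto
      also have "\<dots> = 2 ^ Ex \<pi>" unfolding Ex_def by (simp add: power_sum)
      finally show ?thesis .
    qed
    have term0: "(\<Prod>a=0..<n. f a (\<tau> (\<pi> a))) = 0" if pp: "\<pi> permutes {0..<n}" "\<pi> \<notin> Pp" for \<pi>
    proof -
      obtain a where "a < n" "\<tau> (\<pi> a) \<notin> rs ! (\<rho> a)" using pp unfolding Pp_def by blast
      then show ?thesis unfolding f_def Gm_def by (auto simp: prod_zero_iff intro!: bexI[of _ a])
    qed
    have Exinj: "inj_on Ex Pp"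
    proof (rule inj_onI)
      fix \<pi> \<pi>' assume pp: "\<pi> \<in> Pp" "\<pi>' \<in> Pp" and ee: "Ex \<pi> = Ex \<pi>'"
      have \<pi>: "\<pi> permutes {0..<n}" "\<pi>' permutes {0..<n}" using pp unfolding Pp_def by auto
      define D where "D = (\<lambda>\<sigma>. (\<lambda>a. prod_encode (\<rho> a, \<tau> (\<sigma> a))) ` {0..<n})"
      have Dsum: "Ex \<sigma> = (\<Sum>d\<in>D \<sigma>. 2 ^ d)" for \<sigma>
      proof -
        have "inj_on (\<lambda>a. prod_encode (\<rho> a, \<tau> (\<sigma> a))) {0..<n}"
          using \<rho>inj by (auto simp: inj_on_def prod_encode_eq)
        then show ?thesis unfolding D_def Ex_def by (simp add: sum.reindex)
      qed
      have DD: "D \<pi> = D \<pi>'" 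
      proof -
        have "(\<Sum>d\<in>D \<pi>. (2::nat) ^ d) = (\<Sum>d\<in>D \<pi>'. 2 ^ d)" using ee Dsum by simp
        moreover have "finite (D \<pi>)" "finite (D \<pi>')" unfolding D_def by simp_all
        ultimately show ?thesis using pow2_sum_inj by blast
      qed
      show "\<pi> = \<pi>'"
      proof
        fix x show "\<pi> x = \<pi>' x"
        proof (cases "x < n")
          case True
          have "prod_encode (\<rho> x, \<tau> (\<pi> x)) \<in> D \<pi>'" using DD True unfolding D_def by auto
          then obtain a' where a': "a' < n" "prod_encode (\<rho> x, \<tau> (\<pi> x)) = prod_encode (\<rho> a', \<tau> (\<pi>' a'))"
            unfolding D_def by auto
          then have "\<rho> x = \<rho> a'" "\<tau> (\<pi> x) = \<tau> (\<pi>' a')" by (auto simp: prod_encode_eq)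
          then have "x = a'" using inj_onD[OF \<rho>inj] True a'(1) by simp
          moreover have "\<pi> x < n" "\<pi>' a' < n" using permutes_in_image[OF \<pi>(1)] permutes_in_image[OF \<pi>(2)] True a'(1) by auto
          ultimately show ?thesis using \<open>\<tau> (\<pi> x) = \<tau> (\<pi>' a')\<close> inj_onD[OF \<tau>inj] by simp
        next
          case False
          then show ?thesis using permutes_not_in[OF \<pi>(1)] permutes_not_in[OF \<pi>(2)] by auto
        qed
      qed
    qed
    have "det (mat n n (\<lambda>(a,b). f a (\<tau> b))) =
       (\<Sum>\<pi>\<in>{\<pi>. \<pi> permutes {0..<n}}. signof \<pi> * (\<Prod>a=0..<n. mat n n (\<lambda>(a,b). f a (\<tau> b)) $$ (a, \<pi> a)))"
      by (rule det_def') simp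
    also have "\<dots> = (\<Sum>\<pi>\<in>{\<pi>. \<pi> permutes {0..<n}}. signof \<pi> * (\<Prod>a=0..<n. f a (\<tau> (\<pi> a))))"
    proof (intro sum.cong refl)
      fix \<pi> assume "\<pi> \<in> {\<pi>. \<pi> permutes {0..<n}}"
      then have "\<And>a. a < n \<Longrightarrow> \<pi> a < n" using permutes_in_image[of \<pi> "{0..<n}"] by simp
      then show "signof \<pi> * (\<Prod>a=0..<n. mat n n (\<lambda>(a,b). f a (\<tau> b)) $$ (a, \<pi> a)) =
           signof \<pi> * (\<Prod>a=0..<n. f a (\<tau> (\<pi> a)))" by (auto intro!: prod.cong)
    qed
    also have "\<dots> = (\<Sum>\<pi>\<in>Pp. signof \<pi> * 2 ^ Ex \<pi>)"
      by (rule sum.mono_neutral_cong_right[OF fPerm PpSub]) (auto simp: term0 termPp)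
    also have "\<dots> = (\<Sum>d\<in>Ex ` Pp. signof (the_inv_into Pp Ex d) * 2 ^ d)"
      by (simp add: sum.reindex[OF Exinj] the_inv_into_f_f[OF Exinj])
    also have "\<dots> \<noteq> 0"
      by (rule signed_pow2_sum_nz) (use fPp idPp in \<open>auto simp: sign_def\<close>)
    finally show ?thesis .
  qed

  have eqa: "(\<Sum>c\<in>{i}. Z c * f a c) = (\<Sum>c\<in>B. (- Z c) * f a c)" if "a < n" for a
  proof -
    have "(\<Sum>c\<in>insert i B. Gm (rs ! (\<rho> a)) (\<rho> a) c * Z c) = 0"
      using eq cell[OF that] by blast
    then have "f a i * Z i + (\<Sum>c\<in>B. f a c * Z c) = 0"
      using fin iB unfolding f_def by simp
    then show ?thesis by (simp add: sum_negf algebra_simps)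
  qed
  have M1: "det (mat n n (\<lambda>(a,b). if b = p0 then (\<Sum>c\<in>{i}. Z c * f a c) else f a (\<tau> b))) =
      Z i * det (mat n n (\<lambda>(a,b). f a (\<tau> b)))"
    using det_col_linear[OF p0(1), of "{i}" Z f \<tau>] p0(2) by (simp add: fun_upd_idem)
  have M2: "det (mat n n (\<lambda>(a,b). if b = p0 then (\<Sum>c\<in>B. (- Z c) * f a c) else f a (\<tau> b))) = 0"
  proof -
    have "det (mat n n (\<lambda>(a,b). if b = p0 then (\<Sum>c\<in>B. (- Z c) * f a c) else f a (\<tau> b))) =
       (\<Sum>c\<in>B. (- Z c) * det (mat n n (\<lambda>(a,b). f a ((\<tau>(p0:=c)) b))))"
      by (rule det_col_linear[OF p0(1) fin])
    also have "\<dots> = 0"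
    proof (rule sum.neutral, rule ballI)
      fix c assume "c \<in> B"
      then have "\<forall>b<n. (\<tau>(p0:=c)) b \<in> B" using \<tau>B by auto
      then show "(- Z c) * det (mat n n (\<lambda>(a,b). f a ((\<tau>(p0:=c)) b))) = 0" using D2 by simp
    qed
    finally show ?thesis .
  qed
  have "mat n n (\<lambda>(a,b). if b = p0 then (\<Sum>c\<in>{i}. Z c * f a c) else f a (\<tau> b)) =
        mat n n (\<lambda>(a,b). if b = p0 then (\<Sum>c\<in>B. (- Z c) * f a c) else f a (\<tau> b))"
    by (rule eq_matI) (auto simp del: sum.insert simp add: eqa)
  then have "Z i * det (mat n n (\<lambda>(a,b). f a (\<tau> b))) = 0" using M1 M2 by simp
  then show ?thesis using D1 by simp
qed

lemma part_decode:
  fixes Z :: "nat \<Rightarrow> int"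
  assumes fM: "finite M" and iM: "i \<in> M"
    and lrf: "length rf = kk"
    and J: "J \<le> kk" "mcm (take J rf) (insert i (Bset A M i)) = mcm (take J rf) (Bset A M i) + 1"
    and eqs: "\<forall>j<kk. (\<Sum>c\<in>M. Gm (rf ! j) j c * Z c) = 0"
    and zA: "\<forall>c\<in>M \<inter> A i. Z c = 0"
  shows "Z i = 0"
proof (rule LA)
  show "finite (Bset A M i)" using fM by (simp add: Bset_def)
  show "i \<notin> Bset A M i" by (simp add: Bset_def)
  show "mcm (take J rf) (insert i (Bset A M i)) = mcm (take J rf) (Bset A M i) + 1" by (rule J(2))
  show "\<forall>j<length (take J rf). (\<Sum>c\<in>insert i (Bset A M i). Gm (take J rf ! j) j c * Z c) = 0"
  proof (intro allI impI)
    fix j assume j: "j < length (take J rf)"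
    then have jk: "j < kk" "j < J" using J lrf by auto
    have sub: "insert i (Bset A M i) \<subseteq> M" using iM by (auto simp: Bset_def)
    have tk: "take J rf ! j = rf ! j" using jk(2) by simp
    have "(\<Sum>c\<in>insert i (Bset A M i). Gm (rf ! j) j c * Z c) = (\<Sum>c\<in>M. Gm (rf ! j) j c * Z c)"
      by (rule sum.mono_neutral_left[OF fM sub]) (auto simp: Bset_def zA)
    then have "(\<Sum>c\<in>insert i (Bset A M i). Gm (take J rf ! j) j c * Z c) = (\<Sum>c\<in>M. Gm (rf ! j) j c * Z c)"
      by (simp only: tk)
    also have "\<dots> = 0" using eqs jk by blast
    finally show "(\<Sum>c\<in>insert i (Bset A M i). Gm (take J rf ! j) j c * Z c) = 0" .
  qed
qed

theorem theorem6:
  fixes m :: nat and A :: "nat \<Rightarrow> nat set" and P :: "nat set set" and k :: "nat set \<Rightarrow> nat"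
  assumes "\<forall>i\<in>{1..m}. A i \<subseteq> {1..m} - {i}"
    and "partition_on {1..m} P"
    and "\<forall>M\<in>P. umcd_output A M (k M)"
  shows "beta A {1..m} \<le> real (\<Sum>M\<in>P. k M)"
proof -
  define N where "N = {1..m}"
  have PU: "\<Union>P = N" using assms(2) unfolding N_def partition_on_def by auto
  have Msub: "\<And>M. M \<in> P \<Longrightarrow> M \<subseteq> N" using PU by auto
  have fM: "\<And>M. M \<in> P \<Longrightarrow> finite M" using Msub N_def finite_subset by blast
  have fP: "finite P" using PU N_def by (metis finite_UnionD finite_atLeastAtMost)
  have "\<forall>M\<in>P. \<exists>rf. length rf = k M \<and> (\<forall>j<k M. rf ! j \<subseteq> M) \<and>
      (\<forall>i\<in>M. \<exists>J\<le>k M. mcm (take J rf) (insert i (Bset A M i)) = mcm (take J rf) (Bset A M i) + 1)"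
  proof
    fix M assume MP: "M \<in> P"
    have "umcd_exec A M M [] (k M)" using assms(3) MP by (simp add: umcd_output_def)
    from exec_prop[OF this fM[OF MP]] show "\<exists>rf. length rf = k M \<and> (\<forall>j<k M. rf ! j \<subseteq> M) \<and>
      (\<forall>i\<in>M. \<exists>J\<le>k M. mcm (take J rf) (insert i (Bset A M i)) = mcm (take J rf) (Bset A M i) + 1)"
      by auto
  qed
  then obtain RM where RM: "\<forall>M\<in>P. length (RM M) = k M \<and> (\<forall>j<k M. RM M ! j \<subseteq> M) \<and>
      (\<forall>i\<in>M. \<exists>J\<le>k M. mcm (take J (RM M)) (insert i (Bset A M i)) = mcm (take J (RM M)) (Bset A M i) + 1)"
    by (metis (no_types) bchoice)
  define K where "K = (\<Sum>M\<in>P. k M)"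
  define W where "W = (\<Sum>M\<in>P. \<Sum>j<k M. \<Sum>c\<in>RM M ! j. wt j c)"
  have code: "is_index_code F2 A N t (K * (t + W))" if tpos: "t > 0" for t
  proof -
    define L where "L = t + W"
    have Lpos: "L > 0" using tpos L_def by simp
    have cS: "card (SIGMA M:P. {..<k M}) = K" unfolding K_def using fP by simp
    obtain f where f: "bij_betw f {0..<K} (SIGMA M:P. {..<k M})"
      using ex_bij_betw_nat_finite[of "SIGMA M:P. {..<k M}"] fP cS by auto
    define X where "X = (\<lambda>(x :: nat \<Rightarrow> nat \<Rightarrow> nat) c. \<Sum>l<t. x c l * 2 ^ l)"
    define Y where "Y = (\<lambda>x M j. \<Sum>c\<in>RM M ! j. wt j c * X x c)"
    define \<phi> where "\<phi> = (\<lambda>x. restrict (\<lambda>n. (Y x (fst (f (n div L))) (snd (f (n div L))) div 2 ^ (n mod L)) mod 2) {..<K * L})"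
    define \<psi> where "\<psi> = (\<lambda>i y a. SOME v. \<exists>x\<in>msgs F2 N t. \<phi> x = y \<and> restrict x (A i \<inter> N) = a \<and> x i = v)"
    have xbit: "\<forall>l<t. x c l \<le> 1" if xc: "x \<in> msgs F2 N t" "c \<in> N" for x c
    proof (intro allI impI)
      fix l assume l: "l < t"
      have xcP: "x c \<in> {..<t} \<rightarrow>\<^sub>E carrier F2" using PiE_mem[OF xc(1)[unfolded msgs_def] xc(2)] .
      have "x c l \<in> carrier F2" by (rule PiE_mem[OF xcP]) (simp add: l)
      then show "x c l \<le> 1" unfolding F2_carrier by auto
    qed
    have Xlt: "X x c < 2 ^ t" if "x \<in> msgs F2 N t" "c \<in> N" for x c
      unfolding X_def using binsum_less xbit[OF that] by simp
    have Ylt: "Y x M j < 2 ^ L" if x: "x \<in> msgs F2 N t" and MP: "M \<in> P" and j: "j < k M" for x M j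
    proof -
      have rowN: "RM M ! j \<subseteq> N" using RM MP j Msub by blast
      have frow: "finite (RM M ! j)" using RM MP j fM finite_subset by blast
      have "Y x M j \<le> (\<Sum>c\<in>RM M ! j. wt j c * 2 ^ t)"
        unfolding Y_def using Xlt[OF x] rowN by (intro sum_mono) (auto intro: less_imp_le)
      also have "\<dots> = (\<Sum>c\<in>RM M ! j. wt j c) * 2 ^ t" by (simp add: sum_distrib_right)
      also have "(\<Sum>c\<in>RM M ! j. wt j c) \<le> W"
      proof -
        have "(\<Sum>c\<in>RM M ! j. wt j c) \<le> (\<Sum>j'<k M. \<Sum>c\<in>RM M ! j'. wt j' c)"
          using j by (intro member_le_sum[of j "{..<k M}" "\<lambda>j'. \<Sum>c\<in>RM M ! j'. wt j' c"]) auto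
        also have "\<dots> \<le> W" unfolding W_def
          using MP fP by (intro member_le_sum[of M P "\<lambda>M. \<Sum>j'<k M. \<Sum>c\<in>RM M ! j'. wt j' c"]) auto
        finally show ?thesis .
      qed
      then have "(\<Sum>c\<in>RM M ! j. wt j c) * 2 ^ t \<le> W * 2 ^ t" by simp
      also have "W * 2 ^ t < 2 ^ W * 2 ^ t" by simp
      also have "\<dots> = 2 ^ L" unfolding L_def by (simp add: power_add)
      finally show ?thesis by simp
    qed
    have decode: "x i = x' i" if i: "i \<in> N" and x: "x \<in> msgs F2 N t" and x': "x' \<in> msgs F2 N t"
      and ph: "\<phi> x = \<phi> x'" and ra: "restrict x (A i \<inter> N) = restrict x' (A i \<inter> N)" for i x x'
    proof -
      obtain M where MP: "M \<in> P" and iM: "i \<in> M" using i PU by auto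
      have Yeq: "Y x M j = Y x' M j" if j: "j < k M" for j
      proof -
        have "(M, j) \<in> f ` {0..<K}" using f MP j unfolding bij_betw_def by simp
        then obtain q where q0: "(M, j) = f q" "q \<in> {0..<K}" by (rule imageE)
        then have q: "q < K" "f q = (M, j)" by simp_all
        have "\<forall>l<L. (Y x M j div 2 ^ l) mod 2 = (Y x' M j div 2 ^ l) mod 2"
        proof (intro allI impI)
          fix l assume l: "l < L"
          define nn where "nn = q * L + l"
          have nnlt: "nn < K * L"
          proof -
            have "q * L + l < q * L + L" using l by simp
            also have "\<dots> = Suc q * L" by simp
            also have "\<dots> \<le> K * L" using q(1) by (intro mult_right_mono) auto
            finally show ?thesis unfolding nn_def .
          qed
          have "nn div L = q" "nn mod L = l" unfolding nn_def using l by auto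
          then show "(Y x M j div 2 ^ l) mod 2 = (Y x' M j div 2 ^ l) mod 2"
            using fun_cong[OF ph, of nn] nnlt q(2) unfolding \<phi>_def by simp
        qed
        then show ?thesis using bits_inj Ylt[OF x MP j] Ylt[OF x' MP j] by blast
      qed
      define Z where "Z = (\<lambda>c. if c \<in> M then int (X x c) - int (X x' c) else 0)"
      obtain J where J: "J \<le> k M" "mcm (take J (RM M)) (insert i (Bset A M i)) = mcm (take J (RM M)) (Bset A M i) + 1"
        using RM MP iM by blast
      have "Z i = 0"
      proof (rule part_decode[OF fM[OF MP] iM _ J])
        show "length (RM M) = k M" using RM MP by blast
        show "\<forall>j<k M. (\<Sum>c\<in>M. Gm (RM M ! j) j c * Z c) = 0"
        proof (intro allI impI)
          fix j assume j: "j < k M"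
          have rowM: "RM M ! j \<subseteq> M" using RM MP j by blast
          have "(\<Sum>c\<in>M. Gm (RM M ! j) j c * Z c) = (\<Sum>c\<in>RM M ! j. int (wt j c) * Z c)"
            by (rule sum.mono_neutral_cong_right[OF fM[OF MP] rowM]) (auto simp: Gm_def)
          also have "\<dots> = (\<Sum>c\<in>RM M ! j. int (wt j c * X x c)) - (\<Sum>c\<in>RM M ! j. int (wt j c * X x' c))"
            using rowM by (simp add: Z_def sum_subtractf[symmetric] algebra_simps subset_iff)
          also have "\<dots> = int (Y x M j) - int (Y x' M j)" unfolding Y_def by simp
          also have "\<dots> = 0" using Yeq[OF j] by simp
          finally show "(\<Sum>c\<in>M. Gm (RM M ! j) j c * Z c) = 0" .
        qed
        show "\<forall>c\<in>M \<inter> A i. Z c = 0"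
        proof
          fix c assume c: "c \<in> M \<inter> A i"
          then have "c \<in> A i \<inter> N" using Msub MP by auto
          then have "x c = x' c" using fun_cong[OF ra, of c] by simp
          then show "Z c = 0" unfolding Z_def X_def by simp
        qed
      qed
      then have "X x i = X x' i" unfolding Z_def using iM by simp
      then have "\<forall>l<t. x i l = x' i l"
        using binsum_inj[OF xbit[OF x i] xbit[OF x' i]] unfolding X_def by simp
      moreover have "x i \<in> {..<t} \<rightarrow>\<^sub>E carrier F2" "x' i \<in> {..<t} \<rightarrow>\<^sub>E carrier F2"
        using x x' i unfolding msgs_def by auto
      ultimately show "x i = x' i"
        by (metis PiE_ext lessThan_iff)
    qed
    show ?thesis unfolding is_index_code_def
    proof (intro exI conjI ballI)
      fix x assume x: "x \<in> msgs F2 N t"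
      show "\<phi> x \<in> {..<K * (t + W)} \<rightarrow>\<^sub>E carrier F2"
        unfolding \<phi>_def F2_carrier L_def by auto
    next
      fix i x assume i: "i \<in> N" and x: "x \<in> msgs F2 N t"
      let ?P = "\<lambda>v. \<exists>x'\<in>msgs F2 N t. \<phi> x' = \<phi> x \<and> restrict x' (A i \<inter> N) = restrict x (A i \<inter> N) \<and> x' i = v"
      have "?P (x i)" using x by blast
      then have "?P (SOME v. ?P v)" by (rule someI[of ?P])
      then obtain x' where x': "x' \<in> msgs F2 N t" "\<phi> x' = \<phi> x"
        "restrict x' (A i \<inter> N) = restrict x (A i \<inter> N)" "x' i = (SOME v. ?P v)" by blast
      have "x' i = x i" using decode[OF i x'(1) x x'(2,3)] .
      then show "\<psi> i (\<phi> x) (restrict x (A i \<inter> N)) = x i" unfolding \<psi>_def using x'(4) by simp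
    qed
  qed
  define S where "S = {real r / real t | t r. t > 0 \<and>
      (\<exists>F :: nat ring. field F \<and> finite (carrier F) \<and> is_index_code F A N t r)}"
  have mem: "real (K * (t + W)) / real t \<in> S" if "t > 0" for t
  proof -
    have "finite (carrier F2)" by (simp add: F2_carrier)
    then have "\<exists>F :: nat ring. field F \<and> finite (carrier F) \<and> is_index_code F A N t (K * (t + W))"
      using code[OF that] F2_field by blast
    then show ?thesis unfolding S_def using that by blast
  qed
  have bdd: "bdd_below S" unfolding S_def by (rule bdd_belowI[of _ 0]) auto
  have "Inf S \<le> real K"
  proof (rule field_le_epsilon)
    fix e :: real assume e: "e > 0"
    define t where "t = nat \<lceil>real K * real W / e\<rceil> + 1"
    have tpos: "t > 0" unfolding t_def by simp
    have "real K * real W / e < real t" unfolding t_def by linarith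
    then have "real K * real W < e * real t" using e by (simp add: divide_less_eq mult.commute)
    then have lt: "real K * real W / real t \<le> e" using tpos by (simp add: divide_le_eq)
    have "Inf S \<le> real (K * (t + W)) / real t" by (rule cInf_lower[OF mem[OF tpos] bdd])
    also have "\<dots> = real K + real K * real W / real t" using tpos by (simp add: field_simps)
    also have "\<dots> \<le> real K + e" using lt by simp
    finally show "Inf S \<le> real K + e" .
  qed
  then show ?thesis unfolding beta_def S_def N_def K_def by simp
qed

end
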